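(* Let $C$ be a commutative ring, $A$ a $C$-algebra and $n\ge2$. Then $\mathrm{Obst}_{n-1}(A)\supseteq\mathrm{Obst}_n(A)$.
   Context: For $m\ge1$ and each $a\in A$ let $\xi_{1,a},\dots,\xi_{m,a}$ be new commuting central indeterminates, $A[\xi_{m,A}]$ the polynomial algebra over $A$ in all of them, and $I_{m,A}$ the ideal of $A[\xi_{m,A}]$ generated by $a^m+\xi_{1,a}a^{m-1}+\cdots+\xi_{m,a}$, $a\in A$. Define $\mathrm{Obst}_m(A)=A\cap I_{m,A}$. *)

theory Defs
  imports "HOL-Library.Poly_Mapping"
begin

text \<open>Polynomials over a (possibly noncommutative) ring 'a in commuting central
indeterminates indexed by nat \<times> 'a: the indeterminate xi_{i,a} is indexed by (i,a).\<close>

type_synonym 'a xipoly = "((nat \<times> 'a) \<Rightarrow>\<^sub>0 nat) \<Rightarrow>\<^sub>0 'a"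

definition xconst :: "'a::ring_1 \<Rightarrow> 'a xipoly" where
  "xconst a = Poly_Mapping.single 0 a"

definition xvar :: "nat \<Rightarrow> 'a::ring_1 \<Rightarrow> 'a xipoly" where
  "xvar i a = Poly_Mapping.single (Poly_Mapping.single (i, a) 1) 1"

definition polyring :: "nat \<Rightarrow> 'a::ring_1 xipoly set" where
  "polyring m = {p. \<forall>mon \<in> Poly_Mapping.keys p. \<forall>v \<in> Poly_Mapping.keys mon. 1 \<le> fst v \<and> fst v \<le> m}"

definition is_ideal_in :: "'b::ring set \<Rightarrow> 'b set \<Rightarrow> bool" where
  "is_ideal_in R J \<longleftrightarrow> J \<subseteq> R \<and> 0 \<in> J \<and> (\<forall>x\<in>J. \<forall>y\<in>J. x + y \<in> J) \<and> (\<forall>x\<in>J. - x \<in> J)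
     \<and> (\<forall>r\<in>R. \<forall>x\<in>J. r * x \<in> J \<and> x * r \<in> J)"

definition ideal_gen_in :: "'b::ring set \<Rightarrow> 'b set \<Rightarrow> 'b set" where
  "ideal_gen_in R S = \<Inter> {J. is_ideal_in R J \<and> S \<subseteq> J}"

definition gen_poly :: "nat \<Rightarrow> 'a::ring_1 \<Rightarrow> 'a xipoly" where
  "gen_poly m a = xconst a ^ m + (\<Sum>i\<in>{1..m}. xvar i a * xconst a ^ (m - i))"

definition I_ideal :: "nat \<Rightarrow> 'a::ring_1 xipoly set" where
  "I_ideal m = ideal_gen_in (polyring m) (range (gen_poly m))"

text \<open>Obst_m(A) = A \<inter> I_{m,A}, with A identified with the constant polynomials.\<close>
definition Obst :: "nat \<Rightarrow> 'a::ring_1 set" where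
  "Obst m = {a. xconst a \<in> I_ideal m}"

definition is_algebra_map :: "('c::comm_ring_1 \<Rightarrow> 'a::ring_1) \<Rightarrow> bool" where
  "is_algebra_map f \<longleftrightarrow> f 0 = 0 \<and> f 1 = 1 \<and> (\<forall>x y. f (x + y) = f x + f y)
     \<and> (\<forall>x y. f (x * y) = f x * f y) \<and> (\<forall>c b. f c * b = b * f c)"

end

theory Submission
  imports Defs
begin

definition good :: "nat \<Rightarrow> ((nat \<times> 'a) \<Rightarrow>\<^sub>0 nat) \<Rightarrow> bool" where
  "good k mon \<longleftrightarrow> (\<forall>v\<in>Poly_Mapping.keys mon. fst v \<le> k)"

lemma keys_add_nat: "Poly_Mapping.keys (l + q :: 'b \<Rightarrow>\<^sub>0 nat) = Poly_Mapping.keys l \<union> Poly_Mapping.keys q"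
  by (auto simp: in_keys_iff lookup_add)

lemma good_add: "good k (l + q) \<longleftrightarrow> good k l \<and> good k q"
  unfolding good_def keys_add_nat by blast

definition phi :: "nat \<Rightarrow> 'a::ring_1 xipoly \<Rightarrow> 'a xipoly" where
  "phi k p = Abs_poly_mapping (\<lambda>m. Poly_Mapping.lookup p m when good k m)"

lemma lookup_phi: "Poly_Mapping.lookup (phi k p) m = (Poly_Mapping.lookup p m when good k m)"
proof -
  have "finite {m. (Poly_Mapping.lookup p m when good k m) \<noteq> 0}"
    by (rule finite_subset[of _ "Poly_Mapping.keys p"]) (auto simp: in_keys_iff)
  then show ?thesis unfolding phi_def by simp
qed

lemma phi_add: "phi k (p + q) = phi k p + phi k q"
  by (rule poly_mapping_eqI) (simp add: lookup_phi lookup_add when_def)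

lemma phi_minus: "phi k (- p) = - phi k p"
  by (rule poly_mapping_eqI) (simp add: lookup_phi when_def)

lemma phi_zero: "phi k 0 = 0"
  by (rule poly_mapping_eqI) (simp add: lookup_phi when_def)

lemma phi_mult: "phi k (p * q) = phi k p * phi k q"
proof (rule poly_mapping_eqI)
  fix m
  show "Poly_Mapping.lookup (phi k (p * q)) m = Poly_Mapping.lookup (phi k p * phi k q) m"
  proof (cases "good k m")
    case True
    have "Poly_Mapping.lookup (p * q) m = Poly_Mapping.lookup (phi k p * phi k q) m"
      unfolding lookup_mult
    proof (rule Sum_any.cong)
      fix l
      show "Poly_Mapping.lookup p l * (\<Sum>qa. Poly_Mapping.lookup q qa when m = l + qa) =
            Poly_Mapping.lookup (phi k p) l * (\<Sum>qa. Poly_Mapping.lookup (phi k q) qa when m = l + qa)"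
      proof (cases "good k l")
        case True
        have "(\<Sum>qa. Poly_Mapping.lookup q qa when m = l + qa) = (\<Sum>qa. Poly_Mapping.lookup (phi k q) qa when m = l + qa)"
          by (rule Sum_any.cong) (use \<open>good k m\<close> in \<open>auto simp: lookup_phi when_def good_add\<close>)
        then show ?thesis using True by (simp add: lookup_phi)
      next
        case False
        have "\<forall>qa. (Poly_Mapping.lookup q qa when m = l + qa) = 0"
          using \<open>good k m\<close> False by (auto simp: when_def good_add)
        then have "(\<Sum>qa. Poly_Mapping.lookup q qa when m = l + qa) = 0" by simp
        then show ?thesis using False by (simp add: lookup_phi)
      qed
    qed
    then show ?thesis using True by (simp add: lookup_phi)
  next
    case False
    have "Poly_Mapping.lookup (phi k p * phi k q) m = 0"
    proof -
      have "\<forall>l. Poly_Mapping.lookup (phi k p) l * (\<Sum>qa. Poly_Mapping.lookup (phi k q) qa when m = l + qa) = 0"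
      proof
      fix l
      have "(\<Sum>qa. Poly_Mapping.lookup (phi k q) qa when m = l + qa) = 0" if "good k l"
      proof -
        have "\<forall>qa. (Poly_Mapping.lookup (phi k q) qa when m = l + qa) = 0"
          using False that by (auto simp: lookup_phi when_def good_add)
        then show ?thesis by simp
      qed
      then show "Poly_Mapping.lookup (phi k p) l * (\<Sum>qa. Poly_Mapping.lookup (phi k q) qa when m = l + qa) = 0"
        by (cases "good k l") (auto simp: lookup_phi)
      qed
      then show ?thesis by (simp add: lookup_mult)
    qed
    then show ?thesis using False by (simp add: lookup_phi)
  qed
qed

lemma phi_one: "phi k 1 = 1"
  by (rule poly_mapping_eqI) (simp add: lookup_phi when_def good_def lookup_one)

lemma phi_power: "phi k (p ^ j) = phi k p ^ j"
  by (induction j) (simp_all add: phi_one phi_mult)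

lemma phi_sum: "phi k (sum f S) = sum (\<lambda>i. phi k (f i)) S"
  by (induction S rule: infinite_finite_induct) (simp_all add: phi_zero phi_add)

lemma phi_xconst: "phi k (xconst a) = xconst a"
  by (rule poly_mapping_eqI) (simp add: lookup_phi when_def good_def xconst_def lookup_single)

lemma phi_xvar: "phi k (xvar i a) = (if i \<le> k then xvar i a else 0)"
  by (rule poly_mapping_eqI) (auto simp: lookup_phi when_def good_def xvar_def lookup_single)

lemma phi_polyring: "p \<in> polyring n \<Longrightarrow> phi k p \<in> polyring k"
  unfolding polyring_def mem_Collect_eq
proof (intro ballI)
  fix mon v
  assume p: "\<forall>mon\<in>Poly_Mapping.keys p. \<forall>v\<in>Poly_Mapping.keys mon. 1 \<le> fst v \<and> fst v \<le> n"
    and mon: "mon \<in> Poly_Mapping.keys (phi k p)" and v: "v \<in> Poly_Mapping.keys mon"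
  from mon have "Poly_Mapping.lookup p mon \<noteq> 0" "good k mon"
    by (auto simp: in_keys_iff lookup_phi when_def split: if_splits)
  then have "mon \<in> Poly_Mapping.keys p" "fst v \<le> k" using v by (auto simp: in_keys_iff good_def)
  then show "1 \<le> fst v \<and> fst v \<le> k" using p v by auto
qed

lemma polyring_add: "p \<in> polyring n \<Longrightarrow> q \<in> polyring n \<Longrightarrow> p + q \<in> polyring n"
  unfolding polyring_def mem_Collect_eq
proof (intro ballI)
  fix mon v
  assume p: "\<forall>mon\<in>Poly_Mapping.keys p. \<forall>v\<in>Poly_Mapping.keys mon. 1 \<le> fst v \<and> fst v \<le> n"
    and q: "\<forall>mon\<in>Poly_Mapping.keys q. \<forall>v\<in>Poly_Mapping.keys mon. 1 \<le> fst v \<and> fst v \<le> n"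
    and mon: "mon \<in> Poly_Mapping.keys (p + q)" and v: "v \<in> Poly_Mapping.keys mon"
  have "mon \<in> Poly_Mapping.keys p \<union> Poly_Mapping.keys q" using mon by (rule subsetD[OF keys_add])
  then show "1 \<le> fst v \<and> fst v \<le> n" using p q v by auto
qed

lemma polyring_mult: "p \<in> polyring n \<Longrightarrow> q \<in> polyring n \<Longrightarrow> p * q \<in> polyring n"
  unfolding polyring_def mem_Collect_eq
proof (intro ballI)
  fix mon v
  assume p: "\<forall>mon\<in>Poly_Mapping.keys p. \<forall>v\<in>Poly_Mapping.keys mon. 1 \<le> fst v \<and> fst v \<le> n"
    and q: "\<forall>mon\<in>Poly_Mapping.keys q. \<forall>v\<in>Poly_Mapping.keys mon. 1 \<le> fst v \<and> fst v \<le> n"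
    and mon: "mon \<in> Poly_Mapping.keys (p * q)" and v: "v \<in> Poly_Mapping.keys mon"
  have "mon \<in> {a + b | a b. a \<in> Poly_Mapping.keys p \<and> b \<in> Poly_Mapping.keys q}"
    using mon keys_mult by (rule subsetD[rotated])
  then obtain a b where ab: "mon = a + b" "a \<in> Poly_Mapping.keys p" "b \<in> Poly_Mapping.keys q"
    by auto
  have "v \<in> Poly_Mapping.keys a \<union> Poly_Mapping.keys b"
    using v unfolding ab(1) by (rule subsetD[OF keys_add])
  then show "1 \<le> fst v \<and> fst v \<le> n"
  proof
    assume "v \<in> Poly_Mapping.keys a" then show ?thesis using p ab(2) by auto
  next
    assume "v \<in> Poly_Mapping.keys b" then show ?thesis using q ab(3) by auto
  qed
qed

lemma polyring_one: "1 \<in> polyring n"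
  unfolding polyring_def by simp

lemma polyring_zero: "0 \<in> polyring n"
  unfolding polyring_def by simp

lemma polyring_power: "p \<in> polyring n \<Longrightarrow> p ^ j \<in> polyring n"
  by (induction j) (simp_all add: polyring_one polyring_mult)

lemma polyring_sum: "(\<And>i. i \<in> S \<Longrightarrow> f i \<in> polyring n) \<Longrightarrow> sum f S \<in> polyring n"
  by (induction S rule: infinite_finite_induct) (simp_all add: polyring_zero polyring_add)

lemma polyring_xconst: "xconst a \<in> polyring n"
  unfolding polyring_def xconst_def by simp

lemma polyring_xvar: "1 \<le> i \<Longrightarrow> i \<le> n \<Longrightarrow> xvar i a \<in> polyring n"
  unfolding polyring_def xvar_def by simp

lemma gen_polyring: "gen_poly n a \<in> polyring n"
  unfolding gen_poly_def
  by (intro polyring_add polyring_power polyring_xconst polyring_sum polyring_mult polyring_xvar) auto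

lemma igi_mem: "x \<in> ideal_gen_in R S \<longleftrightarrow> (\<forall>J. is_ideal_in R J \<and> S \<subseteq> J \<longrightarrow> x \<in> J)"
  unfolding ideal_gen_in_def by blast

lemma igi_zero: "0 \<in> ideal_gen_in R S"
  unfolding igi_mem is_ideal_in_def by simp

lemma igi_add: assumes "x \<in> ideal_gen_in R S" "y \<in> ideal_gen_in R S"
  shows "x + y \<in> ideal_gen_in R S"
  unfolding igi_mem
proof (intro allI impI)
  fix J assume h: "is_ideal_in R J \<and> S \<subseteq> J"
  then have "x \<in> J" "y \<in> J" using assms unfolding igi_mem by simp_all
  then show "x + y \<in> J" using h unfolding is_ideal_in_def by simp
qed

lemma igi_uminus: assumes "x \<in> ideal_gen_in R S" shows "- x \<in> ideal_gen_in R S"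
  unfolding igi_mem
proof (intro allI impI)
  fix J assume h: "is_ideal_in R J \<and> S \<subseteq> J"
  then have "x \<in> J" using assms unfolding igi_mem by simp_all
  then show "- x \<in> J" using h unfolding is_ideal_in_def by simp
qed

lemma igi_mult: assumes "r \<in> R" "x \<in> ideal_gen_in R S"
  shows "r * x \<in> ideal_gen_in R S \<and> x * r \<in> ideal_gen_in R S"
  unfolding igi_mem
proof (intro conjI allI impI)
  fix J assume h: "is_ideal_in R J \<and> S \<subseteq> J"
  then have "x \<in> J" using assms unfolding igi_mem by simp_all
  then show "r * x \<in> J" using h assms(1) unfolding is_ideal_in_def by simp
next
  fix J assume h: "is_ideal_in R J \<and> S \<subseteq> J"
  then have "x \<in> J" using assms unfolding igi_mem by simp_all
  then show "x * r \<in> J" using h assms(1) unfolding is_ideal_in_def by simp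
qed

lemma igi_gen: "s \<in> S \<Longrightarrow> s \<in> ideal_gen_in R S"
  unfolding igi_mem by (simp add: subset_iff)

lemma igi_least: "is_ideal_in R J \<Longrightarrow> S \<subseteq> J \<Longrightarrow> ideal_gen_in R S \<subseteq> J"
  unfolding ideal_gen_in_def by (rule Inter_lower) simp

theorem lemma2p24:
  fixes alg :: "'c::comm_ring_1 \<Rightarrow> 'a::ring_1" and n :: nat
  assumes "is_algebra_map alg" and "n \<ge> 2"
  shows "(Obst n :: 'a set) \<subseteq> Obst (n - 1)"
proof
  fix x :: 'a
  assume x: "x \<in> Obst n"
  let ?k = "n - 1"
  define J :: "'a xipoly set" where "J = {p \<in> polyring n. phi ?k p \<in> I_ideal ?k}"
  have gen_in: "gen_poly ?k a * xconst a \<in> I_ideal ?k" for a :: 'a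
    unfolding I_ideal_def
    by (intro igi_mult[THEN conjunct2] polyring_xconst igi_gen) simp
  have phigen: "phi ?k (gen_poly n a) = gen_poly ?k a * xconst a" for a :: 'a
  proof -
    have n: "n = Suc ?k" using assms(2) by simp
    have "phi ?k (gen_poly n a) = xconst a ^ n + (\<Sum>i\<in>{1..n}. phi ?k (xvar i a) * xconst a ^ (n - i))"
      unfolding gen_poly_def by (simp add: phi_add phi_sum phi_mult phi_power phi_xconst)
    also have "(\<Sum>i\<in>{1..n}. phi ?k (xvar i a) * xconst a ^ (n - i))
        = (\<Sum>i\<in>{1..?k}. xvar i a * xconst a ^ (?k - i) * xconst a)"
    proof -
      have "{1..n} = insert n {1..?k}" using n by auto
      then have "(\<Sum>i\<in>{1..n}. phi ?k (xvar i a) * xconst a ^ (n - i))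
         = (\<Sum>i\<in>{1..?k}. phi ?k (xvar i a) * xconst a ^ (n - i))"
        using n by (simp add: phi_xvar)
      also have "\<dots> = (\<Sum>i\<in>{1..?k}. xvar i a * xconst a ^ (?k - i) * xconst a)"
      proof (rule sum.cong)
        fix i assume i: "i \<in> {1..?k}"
        then have "n - i = Suc (?k - i)" using n by auto
        then show "phi ?k (xvar i a) * xconst a ^ (n - i) = xvar i a * xconst a ^ (?k - i) * xconst a"
          using i by (simp add: phi_xvar mult.assoc power_commutes)
      qed simp
      finally show ?thesis .
    qed
    moreover have pw: "xconst a ^ n = xconst a ^ ?k * xconst a" by (metis n power_Suc2)
    ultimately show ?thesis
      unfolding gen_poly_def by (simp add: distrib_right sum_distrib_right)
  qed
  have J_ideal: "is_ideal_in (polyring n) J"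
    unfolding is_ideal_in_def
  proof (intro conjI ballI)
    show "J \<subseteq> polyring n" unfolding J_def by auto
    show "0 \<in> J" unfolding J_def I_ideal_def
      by (simp add: polyring_zero phi_zero igi_zero)
    fix x assume "x \<in> J"
    then show "- x \<in> J" unfolding J_def I_ideal_def
      by (simp add: phi_minus igi_uminus polyring_def)
  next
    fix x y assume "x \<in> J" "y \<in> J"
    then show "x + y \<in> J" unfolding J_def I_ideal_def
      by (simp add: phi_add polyring_add igi_add)
  next
    fix r x :: "'a xipoly" assume r: "r \<in> polyring n" and "x \<in> J"
    have pr: "phi ?k r \<in> polyring ?k" using r by (rule phi_polyring)
    have "r * x \<in> J \<and> x * r \<in> J"
      using \<open>x \<in> J\<close> r igi_mult[OF pr] unfolding J_def I_ideal_def
      by (simp add: phi_mult polyring_mult)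
    then show "r * x \<in> J" "x * r \<in> J" by simp_all
  qed
  have "range (gen_poly n) \<subseteq> J"
    unfolding J_def using gen_polyring phigen gen_in by auto
  then have "I_ideal n \<subseteq> J"
    unfolding I_ideal_def by (rule igi_least[OF J_ideal])
  with x have "xconst x \<in> J" unfolding Obst_def by auto
  then show "x \<in> Obst ?k" unfolding J_def Obst_def by (simp add: phi_xconst)
qed

end
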